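(* Let $n$ be even, $k\ge 1$ an integer, $d=\gcd(k,n)$, $n=td$, $\lambda\in\mathbb{F}_{2^n}$, and $f(x)=Tr(\lambda x^{2^k+1})$ for $x\in\mathbb{F}_{2^n}$. Then $f$ is bent-negabent if and only if one of the following two equivalent statements holds: (1) $\lambda^{2^{n-k}}x^{2^{n-k}}+\lambda x^{2^k}$ is a complete mapping polynomial over $\mathbb{F}_{2^n}$; (2) $\lambda$ is neither of the form $\frac{v_0^{2^{2k}+1}}{(v_0+v_1)^{2^k+1}}$ with $v_0\in\mathbb{F}_{2^n}\setminus\mathbb{F}_{2^d}$ and $v_1=v_0^{2^k}$, nor of the form $v^{2^k+1}$ with $v\in\mathbb{F}_{2^n}$.
   Context: $Tr=Tr_1^n$ is the absolute trace $\mathbb{F}_{2^n}\to\mathbb{F}_2$. A polynomial $F$ over $\mathbb{F}_{2^n}$ is a complete mapping polynomial if both $F(x)$ and $F(x)+x$ are permutation polynomials of $\mathbb{F}_{2^n}$. Fix a self-dual basis of $\mathbb{F}_{2^n}$ over $\mathbb{F}_2$ (basis $\{\alpha_i\}$ with $Tr(\alpha_i\alpha_j)=\delta_{ij}$), identify $\mathbb{F}_{2^n}$ with $\mathbb{F}_2^n$ via coordinates, and let $wt(x)$ be the number of nonzero coordinates of $x$. For $g:\mathbb{F}_{2^n}\to\mathbb{F}_2$: $g$ is bent if $\left|\sum_x(-1)^{g(x)+Tr(\mu x)}\right|=2^{n/2}$ for all $\mu$; $g$ is negabent if $\left|\sum_x(-1)^{g(x)+Tr(\mu x)}\mathrm{i}^{wt(x)}\right|=2^{n/2}$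 for all $\mu$ ($\mathrm{i}=\sqrt{-1}$); $g$ is bent-negabent if it is both. *)

theory Defs
  imports Complex_Main
begin

(* The field F_{2^n} is modelled by a finite field type 'a with CARD('a) = 2^n and 2 = 0. *)

definition tr :: "nat \<Rightarrow> 'a::field \<Rightarrow> 'a" where
  "tr n x = (\<Sum>i<n. x ^ (2 ^ i))"

definition sgn2 :: "'a::field \<Rightarrow> complex" where
  "sgn2 b = (if b = 0 then 1 else -1)"

definition self_dual_basis :: "nat \<Rightarrow> (nat \<Rightarrow> 'a::field) \<Rightarrow> bool" where
  "self_dual_basis n \<alpha> \<longleftrightarrow>
     (\<forall>i<n. \<forall>j<n. tr n (\<alpha> i * \<alpha> j) = (if i = j then 1 else 0))"

text \<open>Hamming weight of x w.r.t. the self-dual basis: the i-th coordinate of x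
  in a self-dual basis is Tr(alpha_i x).\<close>
definition wt :: "nat \<Rightarrow> (nat \<Rightarrow> 'a::field) \<Rightarrow> 'a \<Rightarrow> nat" where
  "wt n \<alpha> x = card {i. i < n \<and> tr n (\<alpha> i * x) \<noteq> 0}"

text \<open>Boolean functions g : F_{2^n} -> F_2 are represented as maps into 'a with values in {0,1}.\<close>
definition bent :: "nat \<Rightarrow> ('a::{field,finite} \<Rightarrow> 'a) \<Rightarrow> bool" where
  "bent n g \<longleftrightarrow>
     (\<forall>\<mu>. cmod (\<Sum>x\<in>UNIV. sgn2 (g x + tr n (\<mu> * x))) = sqrt (2 ^ n))"

definition negabent :: "nat \<Rightarrow> (nat \<Rightarrow> 'a::{field,finite}) \<Rightarrow> ('a \<Rightarrow> 'a) \<Rightarrow> bool" where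
  "negabent n \<alpha> g \<longleftrightarrow>
     (\<forall>\<mu>. cmod (\<Sum>x\<in>UNIV. sgn2 (g x + tr n (\<mu> * x)) * \<i> ^ (wt n \<alpha> x)) = sqrt (2 ^ n))"

definition bent_negabent :: "nat \<Rightarrow> (nat \<Rightarrow> 'a::{field,finite}) \<Rightarrow> ('a \<Rightarrow> 'a) \<Rightarrow> bool" where
  "bent_negabent n \<alpha> g \<longleftrightarrow> bent n g \<and> negabent n \<alpha> g"

definition complete_mapping :: "('a::field \<Rightarrow> 'a) \<Rightarrow> bool" where
  "complete_mapping F \<longleftrightarrow> bij F \<and> bij (\<lambda>x. F x + x)"

end

theory Submission imports Defs begin

context
  fixes n :: nat
  assumes card: "card (UNIV :: 'a::{field,finite} set) = 2 ^ n"
    and char2: "(2::'a) = 0"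
begin

lemma add_self: "(x::'a) + x = 0"
  using char2 by (metis mult_2 mult_zero_left)

lemma minus_eq: "- (x::'a) = x"
  using add_self by (metis add_eq_0_iff)

lemma diff_eq: "(x::'a) - y = x + y"
  using minus_eq by (metis diff_conv_add_uminus)

lemma sq_add: "((x::'a) + y) ^ 2 = x ^ 2 + y ^ 2"
proof -
  have "(x+y)^2 = x^2 + y^2 + 2*x*y" by (simp add: power2_eq_square algebra_simps)
  thus ?thesis using char2 by simp
qed

lemma frob_add: "((x::'a) + y) ^ (2 ^ i) = x ^ (2 ^ i) + y ^ (2 ^ i)"
proof (induction i)
  case 0 then show ?case by simp
next
  case (Suc i)
  have "(x+y)^(2^Suc i) = ((x+y)^(2^i))^2" by (simp add: power_mult[symmetric] mult.commute)
  also have "\<dots> = (x^(2^i))^2 + (y^(2^i))^2" using Suc sq_add by simp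
  also have "\<dots> = x ^ (2 ^ Suc i) + y ^ (2 ^ Suc i)" by (simp add: power_mult[symmetric] mult.commute)
  finally show ?case .
qed

lemma frob_sum: "finite A \<Longrightarrow> (\<Sum>j\<in>A. g j :: 'a) ^ (2 ^ i) = (\<Sum>j\<in>A. g j ^ (2 ^ i))"
  by (induction A rule: finite_induct) (auto simp: frob_add)

lemma frob_inj: "(x::'a) ^ (2 ^ i) = y ^ (2 ^ i) \<Longrightarrow> x = y"
proof -
  assume "x ^ (2 ^ i) = y ^ (2 ^ i)"
  hence "(x + y) ^ (2 ^ i) = 0" using frob_add add_self by simp
  hence "x + y = 0" by simp
  thus "x = y" using add_self by (metis add_left_cancel)
qed

lemma pow_card: "(x::'a) ^ (2 ^ n) = x"
proof (cases "x = 0")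
  case True
  have "n \<noteq> 0 \<or> True" by simp
  have "(2::nat)^n > 0" by simp
  then show ?thesis using True by (simp add: zero_power)
next
  case False
  let ?A = "UNIV - {0::'a}"
  have fin: "finite ?A" by simp
  have bij: "bij_betw (\<lambda>y. x * y) ?A ?A"
  proof -
    have "inj_on (\<lambda>y. x * y) ?A" using False by (auto simp: inj_on_def)
    moreover have "(\<lambda>y. x * y) ` ?A = ?A"
    proof
      show "(\<lambda>y. x * y) ` ?A \<subseteq> ?A" using False by auto
      show "?A \<subseteq> (\<lambda>y. x * y) ` ?A"
      proof
        fix z assume "z \<in> ?A"
        hence "z = x * (z / x)" "z / x \<in> ?A" using False by auto
        thus "z \<in> (\<lambda>y. x * y) ` ?A" by blast
      qed
    qed
    ultimately show ?thesis by (simp add: bij_betw_def)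
  qed
  have "(\<Prod>y\<in>?A. x * y) = (\<Prod>y\<in>?A. y)"
    using prod.reindex_bij_betw[OF bij] by simp
  moreover have "(\<Prod>y\<in>?A. x * y) = x ^ card ?A * (\<Prod>y\<in>?A. y)"
    by (simp add: prod.distrib)
  moreover have "(\<Prod>y\<in>?A. y) \<noteq> 0" by (simp add: prod_zero_iff)
  ultimately have "x ^ card ?A = 1" by simp
  moreover have "card ?A = 2^n - 1" using card by (simp add: card_Diff_singleton)
  ultimately have "x ^ (2^n - 1) = 1" by simp
  moreover have "(2::nat)^n > 0" by simp
  hence "(2::nat)^n = Suc (2^n - 1)" by linarith
  hence "x ^ (2^n) = x ^ (2^n - 1) * x" by (metis power_Suc2)
  ultimately show ?thesis by simp
qed

lemma pow_add2: "(x::'a) ^ (2 ^ (a + b)) = (x ^ (2 ^ a)) ^ (2 ^ b)"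
  by (simp add: power_add power_mult)

lemma pow_mult_n: "(x::'a) ^ (2 ^ (m * n)) = x"
proof (induction m)
  case 0 then show ?case by simp
next
  case (Suc m)
  have "x ^ (2 ^ (Suc m * n)) = (x ^ (2 ^ (m * n))) ^ (2 ^ n)"
    by (metis add.commute mult_Suc pow_add2)
  then show ?case using Suc pow_card by simp
qed

lemma bij_add: "bij (\<lambda>y::'a. y + c)"
proof -
  have "inj (\<lambda>y::'a. y + c)" by (auto simp: inj_def)
  moreover have "surj (\<lambda>y::'a. y + c)"
  proof -
    have "z = (z - c) + c" for z :: 'a by simp
    thus ?thesis by blast
  qed
  ultimately show ?thesis by (simp add: bij_def)
qed

lemma sum_shift: "(\<Sum>y\<in>UNIV. g (y + c)) = (\<Sum>y\<in>UNIV. g (y::'a))"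
  using sum.reindex_bij_betw[OF bij_add[of c], of g] by simp

lemma tr_add: "tr n ((x::'a) + y) = tr n x + tr n y"
  by (simp add: tr_def frob_add sum.distrib)

lemma tr_zero[simp]: "tr n (0::'a) = 0"
  by (simp add: tr_def power_0_left)

lemma tr_sq: "tr n ((x::'a) ^ 2) = tr n x"
proof -
  have "tr n (x^2) = (\<Sum>i<n. x ^ (2 ^ Suc i))"
    unfolding tr_def by (simp add: power_mult[symmetric] mult.commute)
  moreover have "(\<Sum>i<Suc n. x ^ (2 ^ i)) = x ^ (2^0) + (\<Sum>i<n. x ^ (2 ^ Suc i))"
    by (rule sum.lessThan_Suc_shift)
  moreover have "(\<Sum>i<Suc n. x ^ (2 ^ i)) = (\<Sum>i<n. x ^ (2 ^ i)) + x ^ (2 ^ n)"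
    by simp
  ultimately show ?thesis using pow_card by (simp add: tr_def)
qed

lemma tr_frob: "tr n ((x::'a) ^ (2 ^ j)) = tr n x"
proof (induction j)
  case 0 then show ?case by simp
next
  case (Suc j)
  have "x ^ (2 ^ Suc j) = (x ^ (2 ^ j)) ^ 2" by (simp add: power_mult[symmetric] mult.commute)
  then show ?case using Suc tr_sq by simp
qed

lemma tr_square_self: "(tr n (x::'a)) ^ 2 = tr n x"
proof -
  have "(tr n x) ^ 2 = (\<Sum>i<n. (x ^ (2 ^ i)) ^ (2 ^ 1))"
    unfolding tr_def using frob_sum[of "{..<n}" "\<lambda>i. x ^ (2 ^ i)" 1] by simp
  also have "\<dots> = (\<Sum>i<n. (x ^ 2) ^ (2 ^ i))"
    by (simp add: power_mult[symmetric] mult.commute)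
  also have "\<dots> = tr n x" using tr_sq by (simp add: tr_def)
  finally show ?thesis .
qed

lemma tr_01: "tr n (x::'a) = 0 \<or> tr n x = 1"
proof -
  have "tr n x * (tr n x - 1) = 0" using tr_square_self[of x] by (simp add: power2_eq_square algebra_simps)
  thus ?thesis by simp
qed

lemma one_one: "(1::'a) + 1 = 0" using add_self[of 1] by simp

lemma s_tr_add: "sgn2 (tr n ((a::'a) + b)) = sgn2 (tr n a) * sgn2 (tr n b)"
  using tr_01[of a] tr_01[of b] one_one by (auto simp: tr_add sgn2_def)

lemma s_tr_sq: "sgn2 (tr n (a::'a)) * sgn2 (tr n a) = 1"
  by (cases "tr n a = 0") (simp_all add: sgn2_def)

lemma cnj_sgn2[simp]: "cnj (sgn2 t) = sgn2 t"
  by (simp add: sgn2_def)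

lemma sgn2_nz[simp]: "sgn2 t \<noteq> 0"
  by (simp add: sgn2_def)

lemma char_sum:
  assumes z0: "tr n (z0::'a) \<noteq> 0"
  shows "(\<Sum>y\<in>UNIV. sgn2 (tr n ((b::'a) * y))) = (if b = 0 then 2 ^ n else 0)"
proof (cases "b = 0")
  case True
  then show ?thesis using card by (simp add: sgn2_def)
next
  case False
  let ?S = "(\<Sum>y\<in>UNIV. sgn2 (tr n (b * y)))"
  have t1: "tr n z0 = 1" using z0 tr_01 by blast
  have "?S = (\<Sum>y\<in>UNIV. sgn2 (tr n (b * (y + z0 / b))))"
    using sum_shift[of "\<lambda>y. sgn2 (tr n (b * y))" "z0 / b"] by simp
  also have "\<dots> = (\<Sum>y\<in>UNIV. sgn2 (tr n (b * y)) * sgn2 (tr n z0))"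
    using False by (simp add: distrib_left s_tr_add)
  also have "\<dots> = - ?S" using t1 by (simp add: sgn2_def sum_negf)
  finally have "?S = - ?S" .
  hence "?S = 0" by simp
  then show ?thesis using False by simp
qed

lemma tr_sum: "finite S \<Longrightarrow> tr n (\<Sum>j\<in>S. g j :: 'a) = (\<Sum>j\<in>S. tr n (g j))"
  by (induction S rule: finite_induct) (auto simp: tr_add)

lemma tr_smult01: "c = 0 \<or> c = 1 \<Longrightarrow> tr n (c * (x::'a)) = c * tr n x"
  by auto

lemma of_nat_char2: "(of_nat m :: 'a) = (if even m then 0 else 1)"
  by (induction m) (auto simp: one_one char2)

lemma sgn2_of_nat: "sgn2 (of_nat m :: 'a) = (-1) ^ m"
  by (simp add: of_nat_char2 sgn2_def)

definition Co :: "(nat \<Rightarrow> 'a) \<Rightarrow> 'a \<Rightarrow> nat set" where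
  "Co \<alpha> x = {j. j < n \<and> tr n (\<alpha> j * x) \<noteq> 0}"

lemma wt_Co: "wt n \<alpha> x = card (Co \<alpha> x)"
  by (simp add: wt_def Co_def)

lemma Co_fin[simp]: "finite (Co \<alpha> x)"
  by (simp add: Co_def)

lemma Co_add: "Co \<alpha> (x + y) = (Co \<alpha> x - Co \<alpha> y) \<union> (Co \<alpha> y - Co \<alpha> x)"
proof -
  have "tr n (\<alpha> j * (x + y)) \<noteq> 0 \<longleftrightarrow> (tr n (\<alpha> j * x) \<noteq> 0) \<noteq> (tr n (\<alpha> j * y) \<noteq> 0)" for j
    using tr_01[of "\<alpha> j * x"] tr_01[of "\<alpha> j * y"] one_one
    by (auto simp: distrib_left tr_add)
  thus ?thesis unfolding Co_def by blast
qed

context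
  fixes \<alpha> :: "nat \<Rightarrow> 'a"
  assumes sd: "self_dual_basis n \<alpha>"
begin

definition E :: "nat set \<Rightarrow> 'a" where "E S = (\<Sum>j\<in>S. \<alpha> j)"

lemma tr_E: "S \<subseteq> {..<n} \<Longrightarrow> i < n \<Longrightarrow> tr n (\<alpha> i * E S) = (if i \<in> S then 1 else 0)"
proof -
  assume S: "S \<subseteq> {..<n}" and i: "i < n"
  have fin: "finite S" using S finite_subset by blast
  have "tr n (\<alpha> i * E S) = (\<Sum>j\<in>S. tr n (\<alpha> i * \<alpha> j))"
    unfolding E_def by (simp add: sum_distrib_left tr_sum[OF fin])
  also have "\<dots> = (\<Sum>j\<in>S. if i = j then 1 else 0)"
    using sd S i unfolding self_dual_basis_def by (intro sum.cong) auto
  also have "\<dots> = (if i \<in> S then 1 else 0)" using fin by simp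
  finally show ?thesis .
qed

lemma E_inj: "inj_on E (Pow {..<n})"
proof
  fix S T assume S: "S \<in> Pow {..<n}" and T: "T \<in> Pow {..<n}" and eq: "E S = E T"
  have "i \<in> S \<longleftrightarrow> i \<in> T" if "i < n" for i
    using tr_E[of S i] tr_E[of T i] S T that eq by (auto split: if_splits)
  thus "S = T" using S T by auto
qed

lemma E_surj: "E ` Pow {..<n} = UNIV"
proof -
  have "card (E ` Pow {..<n}) = 2 ^ n"
    using card_image[OF E_inj] by (simp add: card_Pow)
  thus ?thesis using card by (metis card_eq_UNIV_imp_eq_UNIV finite)
qed

lemma expand: "x = (\<Sum>j<n. tr n (\<alpha> j * x) * \<alpha> j)"
proof -
  obtain S where S: "S \<subseteq> {..<n}" and x: "x = E S"
    using E_surj by (metis Pow_iff UNIV_I imageE)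
  have "(\<Sum>j<n. tr n (\<alpha> j * x) * \<alpha> j) = (\<Sum>j<n. if j \<in> S then \<alpha> j else 0)"
    using x S tr_E by (intro sum.cong) auto
  also have "\<dots> = (\<Sum>j\<in>{..<n} \<inter> S. \<alpha> j)"
    by (simp add: sum.If_cases)
  also have "{..<n} \<inter> S = S" using S by auto
  finally show ?thesis using x by (simp add: E_def)
qed

lemma tr_prod: "tr n (a * b) = (\<Sum>j<n. tr n (\<alpha> j * a) * tr n (\<alpha> j * b))"
proof -
  have "tr n (a * b) = tr n (\<Sum>j<n. tr n (\<alpha> j * a) * (\<alpha> j * b))"
    by (subst expand[of a]) (simp add: sum_distrib_right mult.assoc)
  also have "\<dots> = (\<Sum>j<n. tr n (tr n (\<alpha> j * a) * (\<alpha> j * b)))"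
    by (simp add: tr_sum)
  also have "\<dots> = (\<Sum>j<n. tr n (\<alpha> j * a) * tr n (\<alpha> j * b))"
    by (intro sum.cong refl tr_smult01[OF tr_01])
  finally show ?thesis .
qed

lemma tr_prod_card: "tr n (a * b) = of_nat (card (Co \<alpha> a \<inter> Co \<alpha> b))"
proof -
  have pt: "tr n (\<alpha> j * a) * tr n (\<alpha> j * b) = (if j \<in> Co \<alpha> a \<inter> Co \<alpha> b then 1 else 0)"
    if "j < n" for j
  proof -
    have "tr n (\<alpha> j * a) = 0 \<or> tr n (\<alpha> j * a) = 1" by (rule tr_01)
    moreover have "tr n (\<alpha> j * b) = 0 \<or> tr n (\<alpha> j * b) = 1" by (rule tr_01)
    ultimately show ?thesis using that unfolding Co_def by auto
  qed
  have "tr n (a * b) = (\<Sum>j<n. if j \<in> Co \<alpha> a \<inter> Co \<alpha> b then 1 else 0)"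
    using pt by (subst tr_prod) (intro sum.cong, auto)
  also have "\<dots> = (\<Sum>j\<in>{..<n} \<inter> (Co \<alpha> a \<inter> Co \<alpha> b). 1)"
    by (rule sum.inter_restrict[symmetric]) simp
  also have "\<dots> = of_nat (card ({..<n} \<inter> (Co \<alpha> a \<inter> Co \<alpha> b)))"
    by simp
  also have "{..<n} \<inter> (Co \<alpha> a \<inter> Co \<alpha> b) = Co \<alpha> a \<inter> Co \<alpha> b" by (auto simp: Co_def)
  finally show ?thesis .
qed

lemma wt_shift: "\<i> ^ wt n \<alpha> (y + a) * cnj (\<i> ^ wt n \<alpha> y) = \<i> ^ wt n \<alpha> a * sgn2 (tr n (a * y))"
proof -
  define A where "A = Co \<alpha> a"
  define Y where "Y = Co \<alpha> y"
  have fA: "finite A" and fY: "finite Y" by (simp_all add: A_def Y_def)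
  define p where "p = card (A - Y)"
  define r where "r = card (Y - A)"
  define m where "m = card (A \<inter> Y)"
  have "wt n \<alpha> (y + a) = card ((Y - A) \<union> (A - Y))"
    unfolding wt_Co Co_add A_def Y_def ..
  also have "\<dots> = r + p" unfolding r_def p_def
    by (rule card_Un_disjoint) (use fA fY in auto)
  finally have c1: "wt n \<alpha> (y + a) = p + r" by simp
  have "wt n \<alpha> y = card ((A \<inter> Y) \<union> (Y - A))"
    unfolding wt_Co Y_def[symmetric] by (rule arg_cong[where f=card]) auto
  also have "\<dots> = m + r" unfolding m_def r_def
    by (rule card_Un_disjoint) (use fA fY in auto)
  finally have c2: "wt n \<alpha> y = m + r" .
  have "wt n \<alpha> a = card ((A - Y) \<union> (A \<inter> Y))"
    unfolding wt_Co A_def[symmetric] by (rule arg_cong[where f=card]) auto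
  also have "\<dots> = p + m" unfolding m_def p_def
    by (rule card_Un_disjoint) (use fA fY in auto)
  finally have c3: "wt n \<alpha> a = p + m" .
  have c4: "sgn2 (tr n (a * y)) = (-1) ^ m"
    unfolding tr_prod_card sgn2_of_nat m_def A_def Y_def ..
  have cj: "cnj (\<i> ^ k) = (- \<i>) ^ k" for k by simp
  have ir: "\<i> ^ r * (- \<i>) ^ r = 1" by (simp add: power_mult_distrib[symmetric])
  have "\<i> ^ (p + r) * (- \<i>) ^ (m + r) = \<i> ^ p * (- \<i>) ^ m * (\<i> ^ r * (- \<i>) ^ r)"
    by (simp add: power_add mult_ac)
  also have "\<dots> = \<i> ^ p * (- \<i>) ^ m" using ir by simp
  also have "\<dots> = \<i> ^ (p + m) * (-1) ^ m"
  proof -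
    have "(- \<i>) ^ m = \<i> ^ m * (-1) ^ m" by (simp add: power_mult_distrib[symmetric])
    thus ?thesis by (simp add: power_add)
  qed
  finally have "\<i> ^ (p + r) * (- \<i>) ^ (m + r) = \<i> ^ (p + m) * (-1) ^ m" .
  thus ?thesis using c1 c2 c3 c4 cj by simp
qed

end

lemma n_pos: "n > 0"
proof (rule ccontr)
  assume "\<not> n > 0"
  hence "card (UNIV :: 'a set) = 1" using card by simp
  moreover have "card {0::'a, 1} \<le> card (UNIV :: 'a set)" by (rule card_mono) auto
  ultimately show False by simp
qed

lemma ek: "n - k mod n + k = (k div n + 1) * n"
proof -
  have h: "k mod n \<le> n" using n_pos by (simp add: less_imp_le_nat)
  have "n - k mod n + k = n - k mod n + (k mod n + k div n * n)" by simp
  also have "\<dots> = n + k div n * n"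
  proof -
    have "\<And>m D. m \<le> n \<Longrightarrow> n - m + (m + D * n) = n + D * n" by simp
    thus ?thesis using h by blast
  qed
  also have "\<dots> = (k div n + 1) * n" by simp
  finally show ?thesis .
qed

lemma sig_tau: "((x::'a) ^ (2 ^ (n - k mod n))) ^ (2 ^ k) = x"
  by (metis ek pow_add2 pow_mult_n)

lemma tau_sig: "((x::'a) ^ (2 ^ k)) ^ (2 ^ (n - k mod n)) = x"
  by (metis ek add.commute pow_add2 pow_mult_n)

definition Fm :: "nat \<Rightarrow> 'a \<Rightarrow> 'a \<Rightarrow> 'a" where
  "Fm k lam x = lam ^ (2 ^ (n - k mod n)) * x ^ (2 ^ (n - k mod n)) + lam * x ^ (2 ^ k)"

lemma Fm_add: "Fm k lam (x + y) = Fm k lam x + Fm k lam y"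
  by (simp add: Fm_def frob_add algebra_simps)

lemma Fm_zero: "Fm k lam 0 = 0"
  by (simp add: Fm_def power_0_left)

lemma quad_tr:
  "tr n (lam * (y + a) ^ (2 ^ k + 1) + mu * (y + a)) + tr n (lam * y ^ (2 ^ k + 1) + mu * y)
   = tr n (lam * a ^ (2 ^ k + 1) + mu * a) + tr n (y * Fm k lam (a::'a))"
proof -
  let ?q = "2 ^ k :: nat"
  let ?e = "2 ^ (n - k mod n) :: nat"
  define Yq where "Yq = y ^ ?q"
  define Aq where "Aq = a ^ ?q"
  have e1: "(y + a) ^ (?q + 1) = (Yq + Aq) * (y + a)"
    unfolding Yq_def Aq_def by (simp only: power_add power_one_right frob_add)
  have e2: "y ^ (?q + 1) = Yq * y" unfolding Yq_def by (simp only: power_add power_one_right)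
  have e3: "a ^ (?q + 1) = Aq * a" unfolding Aq_def by (simp only: power_add power_one_right)
  have t1: "tr n (lam * a * Yq) = tr n ((lam * a) ^ ?e * y)"
  proof -
    have "((lam * a) ^ ?e * y) ^ ?q = lam * a * Yq"
      unfolding Yq_def by (simp only: power_mult_distrib sig_tau)
    hence "tr n (lam * a * Yq) = tr n (((lam * a) ^ ?e * y) ^ ?q)" by simp
    thus ?thesis by (simp only: tr_frob)
  qed
  have r: "(lam * ((Yq + Aq) * (y + a)) + mu * (y + a)) + (lam * (Yq * y) + mu * y)
      = ((lam * (Aq * a) + mu * a) + (lam * a * Yq + lam * Aq * y))
        + ((lam * (Yq * y) + lam * (Yq * y)) + (mu * y + mu * y))"
    by (simp add: algebra_simps)
  have fm: "y * Fm k lam a = (lam * a) ^ ?e * y + lam * Aq * y"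
    unfolding Fm_def Aq_def by (simp add: power_mult_distrib algebra_simps)
  have "tr n (lam * (y + a) ^ (?q + 1) + mu * (y + a)) + tr n (lam * y ^ (?q + 1) + mu * y)
      = tr n ((lam * ((Yq + Aq) * (y + a)) + mu * (y + a)) + (lam * (Yq * y) + mu * y))"
    unfolding e1 e2 by (simp only: tr_add)
  also have "\<dots> = tr n ((lam * (Aq * a) + mu * a) + (lam * a * Yq + lam * Aq * y))"
    unfolding r by (simp only: add_self add_0_right)
  also have "\<dots> = tr n (lam * (Aq * a) + mu * a) + (tr n (lam * a * Yq) + tr n (lam * Aq * y))"
    by (simp only: tr_add)
  also have "\<dots> = tr n (lam * a ^ (?q + 1) + mu * a) + tr n (y * Fm k lam a)"
    unfolding t1 fm e3 by (simp only: tr_add)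
  finally show ?thesis .
qed


lemma s_tr_split: "sgn2 (tr n (u + v)) = sgn2 (tr n (u::'a)) * sgn2 (tr n v)"
  by (rule s_tr_add)

lemma pair_formula:
  assumes hpsi: "\<And>y a. psi (y + a) * cnj (psi y) = psi a * sgn2 (tr n (c * a * y))"
  shows "(sgn2 (tr n (lam * (y + a) ^ (2 ^ k + 1) + mu * (y + a))) * psi (y + a))
          * cnj (sgn2 (tr n (lam * y ^ (2 ^ k + 1) + mu * y)) * psi y)
       = psi a * sgn2 (tr n (lam * a ^ (2 ^ k + 1) + mu * a)) * sgn2 (tr n ((Fm k lam a + c * a) * (y::'a)))"
proof -
  let ?P = "lam * (y + a) ^ (2 ^ k + 1) + mu * (y + a)"
  let ?Q = "lam * y ^ (2 ^ k + 1) + mu * y"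
  let ?R = "lam * a ^ (2 ^ k + 1) + mu * a"
  let ?S = "y * Fm k lam a"
  have "sgn2 (tr n ?P) * sgn2 (tr n ?Q) = sgn2 (tr n ?R) * sgn2 (tr n ?S)"
  proof -
    have "sgn2 (tr n ?P) * sgn2 (tr n ?Q) = sgn2 (tr n (?P + ?Q))" by (rule s_tr_add[symmetric])
    also have "tr n (?P + ?Q) = tr n (?R + ?S)" using quad_tr[where lam=lam and y=y and a=a and mu=mu and k=k] by (simp only: tr_add)
    also have "sgn2 (tr n (?R + ?S)) = sgn2 (tr n ?R) * sgn2 (tr n ?S)" by (rule s_tr_add)
    finally show ?thesis .
  qed
  note PQ = this
  have SS: "sgn2 (tr n ?S) * sgn2 (tr n (c * a * y)) = sgn2 (tr n ((Fm k lam a + c * a) * y))"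
    by (simp add: s_tr_add[symmetric] algebra_simps)
  have "(sgn2 (tr n ?P) * psi (y + a)) * cnj (sgn2 (tr n ?Q) * psi y)
      = (sgn2 (tr n ?P) * sgn2 (tr n ?Q)) * (psi (y + a) * cnj (psi y))"
    by (simp add: mult_ac)
  also have "\<dots> = (sgn2 (tr n ?R) * sgn2 (tr n ?S)) * (psi a * sgn2 (tr n (c * a * y)))"
    unfolding PQ hpsi ..
  also have "\<dots> = psi a * sgn2 (tr n ?R) * (sgn2 (tr n ?S) * sgn2 (tr n (c * a * y)))"
    by (simp add: mult_ac)
  also have "\<dots> = psi a * sgn2 (tr n ?R) * sgn2 (tr n ((Fm k lam a + c * a) * y))"
    unfolding SS ..
  finally show ?thesis .
qed


lemma walsh_sq:
  assumes hpsi: "\<And>y a. psi (y + a) * cnj (psi y) = psi a * sgn2 (tr n (c * a * y))"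
    and z0: "tr n (z0::'a) \<noteq> 0"
  shows "(\<Sum>x\<in>UNIV. sgn2 (tr n (lam * x ^ (2 ^ k + 1)) + tr n (mu * x)) * psi x)
       * cnj (\<Sum>x\<in>UNIV. sgn2 (tr n (lam * x ^ (2 ^ k + 1)) + tr n (mu * x)) * psi x)
       = 2 ^ n * (\<Sum>a\<in>{a. Fm k lam a + c * a = 0}. psi a * sgn2 (tr n (lam * a ^ (2 ^ k + 1) + mu * a)))"
proof -
  define A where "A x = sgn2 (tr n (lam * x ^ (2 ^ k + 1) + mu * x)) * psi x" for x
  have W: "(\<Sum>x\<in>UNIV. sgn2 (tr n (lam * x ^ (2 ^ k + 1)) + tr n (mu * x)) * psi x) = (\<Sum>x\<in>UNIV. A x)"
    unfolding A_def by (simp add: tr_add)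
  have "(\<Sum>x\<in>UNIV. A x) * cnj (\<Sum>x\<in>UNIV. A x) = (\<Sum>x\<in>UNIV. \<Sum>y\<in>UNIV. A x * cnj (A y))"
    by (simp add: sum_product)
  also have "\<dots> = (\<Sum>y\<in>UNIV. \<Sum>x\<in>UNIV. A x * cnj (A y))"
    by (rule sum.swap)
  also have "\<dots> = (\<Sum>y\<in>UNIV. \<Sum>a\<in>UNIV. A (a + y) * cnj (A y))"
  proof (rule sum.cong[OF refl])
    fix y show "(\<Sum>x\<in>UNIV. A x * cnj (A y)) = (\<Sum>a\<in>UNIV. A (a + y) * cnj (A y))"
      by (rule sum_shift[where g="\<lambda>x. A x * cnj (A y)" and c=y, symmetric])
  qed
  also have "\<dots> = (\<Sum>a\<in>UNIV. \<Sum>y\<in>UNIV. A (y + a) * cnj (A y))"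
    by (subst sum.swap) (simp add: add.commute)
  also have "\<dots> = (\<Sum>a\<in>UNIV. \<Sum>y\<in>UNIV. psi a * sgn2 (tr n (lam * a ^ (2 ^ k + 1) + mu * a))
                 * sgn2 (tr n ((Fm k lam a + c * a) * y)))"
    unfolding A_def using pair_formula[OF hpsi] by (intro sum.cong refl) blast
  also have "\<dots> = (\<Sum>a\<in>UNIV. psi a * sgn2 (tr n (lam * a ^ (2 ^ k + 1) + mu * a))
                 * (if Fm k lam a + c * a = 0 then 2 ^ n else 0))"
    by (intro sum.cong refl) (simp add: sum_distrib_left[symmetric] char_sum[OF z0])
  also have "\<dots> = (\<Sum>a\<in>UNIV. if Fm k lam a + c * a = 0 then 2 ^ n * (psi a * sgn2 (tr n (lam * a ^ (2 ^ k + 1) + mu * a))) else 0)"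
    by (intro sum.cong refl) (simp add: mult_ac)
  also have "\<dots> = (\<Sum>a\<in>{a\<in>UNIV. Fm k lam a + c * a = 0}. 2 ^ n * (psi a * sgn2 (tr n (lam * a ^ (2 ^ k + 1) + mu * a))))"
    by (rule sum.inter_filter[symmetric]) simp
  also have "\<dots> = 2 ^ n * (\<Sum>a\<in>{a. Fm k lam a + c * a = 0}. psi a * sgn2 (tr n (lam * a ^ (2 ^ k + 1) + mu * a)))"
    by (simp add: sum_distrib_left)
  finally show ?thesis unfolding W .
qed


lemma cmod_sqrt_iff: "cmod z = sqrt (2 ^ n) \<longleftrightarrow> z * cnj z = 2 ^ n"
proof -
  have "cmod z = sqrt (2 ^ n) \<longleftrightarrow> (cmod z)\<^sup>2 = 2 ^ n"
  proof
    assume "cmod z = sqrt (2 ^ n)" thus "(cmod z)\<^sup>2 = 2 ^ n" by simp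
  next
    assume "(cmod z)\<^sup>2 = 2 ^ n" thus "cmod z = sqrt (2 ^ n)"
      by (metis norm_ge_zero real_sqrt_unique)
  qed
  also have "\<dots> \<longleftrightarrow> complex_of_real ((cmod z)\<^sup>2) = 2 ^ n"
    by (metis of_real_eq_iff of_real_numeral of_real_power)
  also have "\<dots> \<longleftrightarrow> z * cnj z = 2 ^ n" by (simp only: complex_norm_square)
  finally show ?thesis .
qed

lemma add_eq0_iff: "(x::'a) + y = 0 \<longleftrightarrow> x = y"
  using add_self by (metis add_left_cancel)

lemma walsh_iff:
  assumes hpsi: "\<And>y a. psi (y + a) * cnj (psi y) = psi a * sgn2 (tr n (c * a * y))"
    and psi0: "psi 0 = 1" and psinz: "\<And>a. psi a \<noteq> 0"
    and z0: "tr n (z0::'a) \<noteq> 0"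
  shows "(\<forall>mu. cmod (\<Sum>x\<in>UNIV. sgn2 (tr n (lam * x ^ (2 ^ k + 1)) + tr n (mu * x)) * psi x) = sqrt (2 ^ n))
         \<longleftrightarrow> (\<forall>a. Fm k lam a + c * a = 0 \<longrightarrow> a = 0)"
proof -
  define K where "K = {a. Fm k lam a + c * a = 0}"
  define R where "R a = psi a * sgn2 (tr n (lam * a ^ (2 ^ k + 1)))" for a
  define T where "T mu = (\<Sum>a\<in>K. R a * sgn2 (tr n (mu * a)))" for mu
  have finK: "finite K" by simp
  have TT: "(\<Sum>a\<in>K. psi a * sgn2 (tr n (lam * a ^ (2 ^ k + 1) + mu * a))) = T mu" for mu
    unfolding T_def R_def by (intro sum.cong refl) (simp add: s_tr_add mult_ac)
  have "(\<forall>mu. cmod (\<Sum>x\<in>UNIV. sgn2 (tr n (lam * x ^ (2 ^ k + 1)) + tr n (mu * x)) * psi x) = sqrt (2 ^ n))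
        \<longleftrightarrow> (\<forall>mu. (2::complex) ^ n * T mu = 2 ^ n)"
    unfolding cmod_sqrt_iff walsh_sq[OF hpsi z0] K_def[symmetric] TT ..
  also have "\<dots> \<longleftrightarrow> (\<forall>mu. T mu = 1)" by simp
  also have "\<dots> \<longleftrightarrow> (\<forall>a. Fm k lam a + c * a = 0 \<longrightarrow> a = 0)"
  proof
    assume all: "\<forall>mu. T mu = 1"
    show "\<forall>a. Fm k lam a + c * a = 0 \<longrightarrow> a = 0"
    proof (rule ccontr)
      assume "\<not> (\<forall>a. Fm k lam a + c * a = 0 \<longrightarrow> a = 0)"
      then obtain b where bK: "b \<in> K" and b0: "b \<noteq> 0" unfolding K_def by auto
      have "(\<Sum>mu\<in>UNIV. T mu * sgn2 (tr n (b * mu))) = 0"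
        using all char_sum[OF z0, of b] b0 by simp
      moreover have "(\<Sum>mu\<in>UNIV. T mu * sgn2 (tr n (b * mu))) = 2 ^ n * R b"
      proof -
        have "(\<Sum>mu\<in>UNIV. T mu * sgn2 (tr n (b * mu)))
            = (\<Sum>mu\<in>UNIV. \<Sum>a\<in>K. R a * sgn2 (tr n ((a + b) * mu)))"
          unfolding T_def sum_distrib_right
          by (intro sum.cong refl) (simp add: mult.assoc s_tr_add[symmetric] algebra_simps)
        also have "\<dots> = (\<Sum>a\<in>K. R a * (\<Sum>mu\<in>UNIV. sgn2 (tr n ((a + b) * mu))))"
          by (subst sum.swap) (simp add: sum_distrib_left)
        also have "\<dots> = (\<Sum>a\<in>K. if a = b then R a * 2 ^ n else 0)"
          by (intro sum.cong refl) (simp add: char_sum[OF z0] add_eq0_iff)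
        also have "\<dots> = R b * 2 ^ n" using bK finK by simp
        finally show ?thesis by simp
      qed
      moreover have "R b \<noteq> 0" unfolding R_def using psinz by simp
      ultimately show False by simp
    qed
  next
    assume triv: "\<forall>a. Fm k lam a + c * a = 0 \<longrightarrow> a = 0"
    have "K = {0}"
    proof (rule set_eqI, rule iffI)
      fix a assume "a \<in> K" thus "a \<in> {0}" unfolding K_def using triv by blast
    next
      fix a :: 'a assume "a \<in> {0}" hence "a = 0" by simp
      thus "a \<in> K" unfolding K_def by (simp add: Fm_zero)
    qed
    thus "\<forall>mu. T mu = 1" unfolding T_def R_def using psi0 by (simp add: power_0_left sgn2_def)
  qed
  finally show ?thesis .
qed


lemma sd_z0: "self_dual_basis n \<alpha> \<Longrightarrow> tr n (\<alpha> 0 * \<alpha> 0 :: 'a) \<noteq> 0"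
  using n_pos unfolding self_dual_basis_def by auto

lemma bent_iff:
  assumes sd: "self_dual_basis n (\<alpha> :: nat \<Rightarrow> 'a)"
  shows "bent n (\<lambda>x::'a. tr n (lam * x ^ (2 ^ k + 1))) \<longleftrightarrow> (\<forall>a. Fm k lam a = 0 \<longrightarrow> a = 0)"
proof -
  have "bent n (\<lambda>x::'a. tr n (lam * x ^ (2 ^ k + 1))) \<longleftrightarrow>
    (\<forall>mu. cmod (\<Sum>x\<in>UNIV. sgn2 (tr n (lam * x ^ (2 ^ k + 1)) + tr n (mu * x)) * (\<lambda>_. 1) x) = sqrt (2 ^ n))"
    unfolding bent_def by simp
  also have "\<dots> \<longleftrightarrow> (\<forall>a. Fm k lam a + 0 * a = 0 \<longrightarrow> a = 0)"
    by (rule walsh_iff[OF _ _ _ sd_z0[OF sd]]) (simp_all add: sgn2_def)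
  finally show ?thesis by simp
qed

lemma negabent_iff:
  assumes sd: "self_dual_basis n \<alpha>"
  shows "negabent n \<alpha> (\<lambda>x::'a. tr n (lam * x ^ (2 ^ k + 1))) \<longleftrightarrow> (\<forall>a. Fm k lam a + a = 0 \<longrightarrow> a = 0)"
proof -
  have w0: "wt n \<alpha> (0::'a) = 0" by (simp add: wt_def)
  have "negabent n \<alpha> (\<lambda>x::'a. tr n (lam * x ^ (2 ^ k + 1))) \<longleftrightarrow>
    (\<forall>mu. cmod (\<Sum>x\<in>UNIV. sgn2 (tr n (lam * x ^ (2 ^ k + 1)) + tr n (mu * x)) * (\<lambda>x. \<i> ^ wt n \<alpha> x) x) = sqrt (2 ^ n))"
    unfolding negabent_def by simp
  also have "\<dots> \<longleftrightarrow> (\<forall>a. Fm k lam a + 1 * a = 0 \<longrightarrow> a = 0)"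
  proof (rule walsh_iff[OF _ _ _ sd_z0[OF sd]])
    show "\<i> ^ wt n \<alpha> (y + a) * cnj (\<i> ^ wt n \<alpha> y) = \<i> ^ wt n \<alpha> a * sgn2 (tr n (1 * a * y))" for y a
      using wt_shift[OF sd, of y a] by simp
  qed (simp_all add: w0)
  finally show ?thesis by simp
qed


lemma powit: "(w::'a) ^ (2 ^ a) = w \<Longrightarrow> w ^ (2 ^ (j * a)) = w"
proof (induction j)
  case 0 then show ?case by simp
next
  case (Suc j)
  have "w ^ (2 ^ (Suc j * a)) = (w ^ (2 ^ (j * a))) ^ (2 ^ a)"
    by (metis add.commute mult_Suc pow_add2)
  then show ?case using Suc by simp
qed

lemma fix_gcd:
  assumes k0: "k \<noteq> 0" and w: "(w::'a) ^ (2 ^ k) = w"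
  shows "w ^ (2 ^ gcd k n) = w"
proof -
  obtain x y where b: "k * x = n * y + gcd k n" using bezout_nat[OF k0] by blast
  have "w = w ^ (2 ^ (x * k))" using powit[OF w] by simp
  also have "\<dots> = w ^ (2 ^ (y * n + gcd k n))" using b by (simp add: mult.commute)
  also have "\<dots> = (w ^ (2 ^ (y * n))) ^ (2 ^ gcd k n)" by (rule pow_add2)
  also have "\<dots> = w ^ (2 ^ gcd k n)" using pow_mult_n by simp
  finally show ?thesis by simp
qed

lemma fix_dvd:
  assumes "d dvd k" and w: "(w::'a) ^ (2 ^ d) = w"
  shows "w ^ (2 ^ k) = w"
proof -
  obtain j where "k = j * d" using assms(1) by (auto simp: dvd_def mult.commute)
  thus ?thesis using powit[OF w] by simp
qed

lemma sqrt_ex: "\<exists>t::'a. t ^ 2 = c"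
proof
  have "(c ^ (2 ^ (n - 1))) ^ 2 = c ^ (2 ^ (n - 1 + 1))" by (subst pow_add2) simp
  also have "n - 1 + 1 = n" using n_pos by simp
  finally show "(c ^ (2 ^ (n - 1))) ^ 2 = c" using pow_card by simp
qed

lemma root2q_ex: "\<exists>w::'a. w ^ (2 ^ Suc k) = u"
proof
  have "(u ^ (2 ^ (Suc k * n - Suc k))) ^ (2 ^ Suc k) = u ^ (2 ^ (Suc k * n - Suc k + Suc k))"
    by (rule pow_add2[symmetric])
  also have "Suc k * n - Suc k + Suc k = Suc k * n"
  proof (rule le_add_diff_inverse2)
    show "Suc k \<le> Suc k * n" using n_pos by (metis mult_le_mono2 mult.right_neutral Suc_leI One_nat_def)
  qed
  also have "u ^ (2 ^ (Suc k * n)) = u" by (rule pow_mult_n)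
  finally show "(u ^ (2 ^ (Suc k * n - Suc k))) ^ (2 ^ Suc k) = u" .
qed

lemma sig_Fm: "(Fm k lam x) ^ (2 ^ k) = lam * x + lam ^ (2 ^ k) * (x::'a) ^ (2 ^ k * 2 ^ k)"
  unfolding Fm_def frob_add by (simp add: power_mult_distrib sig_tau power_mult)

lemma u_id: "(Fm k lam x) ^ (2 ^ k) * (x::'a) ^ (2 ^ k)
   = lam * x ^ (2 ^ k + 1) + (lam * x ^ (2 ^ k + 1)) ^ (2 ^ k)"
proof -
  have e: "(2 ^ k + 1) * 2 ^ k = 2 ^ k * 2 ^ k + (2::nat) ^ k" by (simp add: algebra_simps)
  show ?thesis unfolding sig_Fm
    by (simp add: algebra_simps power_mult_distrib power_add[symmetric] power_mult[symmetric] e)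
qed


lemma ker0:
  "(\<exists>x::'a. x \<noteq> 0 \<and> Fm k lam x = 0) \<longleftrightarrow> (\<exists>v. lam = v ^ (2 ^ k + 1))"
proof
  assume "\<exists>x::'a. x \<noteq> 0 \<and> Fm k lam x = 0"
  then obtain x where x0: "x \<noteq> 0" and F: "Fm k lam x = 0" by blast
  let ?q = "2 ^ k :: nat"
  define c where "c = lam * x ^ (?q + 1)"
  have "c + c ^ ?q = 0" using u_id[of k lam x] F unfolding c_def by (simp add: power_0_left)
  hence cq: "c ^ ?q = c" using add_eq0_iff by metis
  obtain t where t: "t ^ 2 = c" using sqrt_ex by blast
  have "(t ^ ?q) ^ (2 ^ 1) = (t ^ 2) ^ ?q" by (simp add: power_mult[symmetric] mult.commute)
  also have "\<dots> = c" using t cq by simp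
  also have "\<dots> = t ^ (2 ^ 1)" using t by simp
  finally have "(t ^ ?q) ^ (2 ^ 1) = t ^ (2 ^ 1)" .
  hence tq: "t ^ ?q = t" by (rule frob_inj)
  have tc: "t ^ (?q + 1) = c" using tq t by (simp add: power_add power2_eq_square)
  have "lam = c / x ^ (?q + 1)" using x0 unfolding c_def by simp
  also have "\<dots> = (t / x) ^ (?q + 1)" using tc by (simp add: power_divide)
  finally show "\<exists>v. lam = v ^ (2 ^ k + 1)" by blast
next
  assume "\<exists>v. lam = v ^ (2 ^ k + 1)"
  then obtain v where lv: "lam = v ^ (2 ^ k + 1)" by blast
  let ?q = "2 ^ k :: nat"
  show "\<exists>x::'a. x \<noteq> 0 \<and> Fm k lam x = 0"
  proof (cases "v = 0")
    case True
    hence "lam = 0" using lv by simp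
    hence "Fm k lam 1 = 0" by (simp add: Fm_def power_0_left)
    thus ?thesis by (intro exI[of _ 1]) simp
  next
    case False
    let ?x = "1 / v"
    have u1: "lam * ?x ^ (?q + 1) = 1" using False lv by (simp add: power_divide)
    have "(Fm k lam ?x) ^ ?q * ?x ^ ?q = lam * ?x ^ (?q + 1) + (lam * ?x ^ (?q + 1)) ^ ?q"
      by (rule u_id)
    also have "\<dots> = 0" unfolding u1 by (simp add: char2)
    finally have "(Fm k lam ?x) ^ ?q * ?x ^ ?q = 0" .
    hence "Fm k lam ?x = 0" using False by simp
    thus ?thesis using False by (intro exI[of _ ?x]) simp
  qed
qed


lemma lamform:
  assumes w0: "(w::'a) \<noteq> 0"
  shows "(1 / w) ^ (2 ^ (2 * k) + 1) / (1 / w + (1 / w) ^ (2 ^ k)) ^ (2 ^ k + 1)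
       = w ^ (2 ^ k * 2) / (w + w ^ (2 ^ k)) ^ (2 ^ k + 1)"
proof -
  let ?q = "2 ^ k :: nat"
  have wq: "w ^ ?q \<noteq> 0" using w0 by simp
  have a: "1 / w + (1 / w) ^ ?q = (w + w ^ ?q) / w ^ (?q + 1)"
    using w0 wq by (simp add: field_simps power_add)
  have ee: "2 ^ (2 * k) = ?q * ?q" by (simp add: mult_2 power_add)
  define X where "X = (w + w ^ ?q) ^ (?q + 1)"
  define A where "A = w ^ (?q * ?q + 1)"
  define C where "C = w ^ (?q * 2)"
  have B: "(w ^ (?q + 1)) ^ (?q + 1) = A * C"
  proof -
    have e: "(?q + 1) * (?q + 1) = (?q * ?q + 1) + ?q * 2" by (simp add: algebra_simps)
    have "(w ^ (?q + 1)) ^ (?q + 1) = w ^ ((?q + 1) * (?q + 1))" by (rule power_mult[symmetric])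
    also have "\<dots> = w ^ ((?q * ?q + 1) + ?q * 2)" by (simp only: e)
    also have "\<dots> = A * C" unfolding A_def C_def by (rule power_add)
    finally show ?thesis .
  qed
  have A0: "A \<noteq> 0" unfolding A_def using w0 by simp
  have "(1 / w) ^ (2 ^ (2 * k) + 1) / (1 / w + (1 / w) ^ ?q) ^ (?q + 1)
      = (1 / A) / (X / (A * C))"
  proof -
    have p1: "(1 / w) ^ (?q * ?q + 1) = 1 / A" unfolding A_def by (rule power_one_over)
    have p2: "((w + w ^ ?q) / w ^ (?q + 1)) ^ (?q + 1) = X / (A * C)"
      unfolding X_def B[symmetric] by (rule power_divide)
    show ?thesis unfolding a ee p1 p2 ..
  qed
  also have "\<dots> = C / X"
    using A0 by (cases "X = 0") (simp_all add: field_simps)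
  finally show ?thesis unfolding C_def X_def .
qed


lemma u_id1: "(Fm k lam x + x) ^ (2 ^ k) * (x::'a) ^ (2 ^ k)
   = (lam * x ^ (2 ^ k + 1) + (lam * x ^ (2 ^ k + 1)) ^ (2 ^ k)) + x ^ (2 ^ Suc k)"
proof -
  have "(Fm k lam x + x) ^ (2 ^ k) * x ^ (2 ^ k) = (Fm k lam x) ^ (2 ^ k) * x ^ (2 ^ k) + x ^ (2 ^ k) * x ^ (2 ^ k)"
    by (simp add: frob_add algebra_simps)
  also have "x ^ (2 ^ k) * x ^ (2 ^ k) = x ^ (2 ^ Suc k)"
    by (simp add: power_add[symmetric] mult_2)
  finally show ?thesis unfolding u_id .
qed

lemma swap_pow: "((w::'a) ^ (2 ^ k)) ^ (2 ^ Suc k) = (w ^ (2 ^ Suc k)) ^ (2 ^ k)"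
  by (simp add: power_mult[symmetric] mult.commute)

lemma ker1:
  assumes k0: "k \<noteq> 0"
  shows "(\<exists>x::'a. x \<noteq> 0 \<and> Fm k lam x + x = 0) \<longleftrightarrow>
         (\<exists>v0. v0 ^ (2 ^ gcd k n) \<noteq> v0 \<and> lam = v0 ^ (2 ^ (2 * k) + 1) / (v0 + v0 ^ (2 ^ k)) ^ (2 ^ k + 1))"
proof
  let ?q = "2 ^ k :: nat"
  assume "\<exists>x::'a. x \<noteq> 0 \<and> Fm k lam x + x = 0"
  then obtain x where x0: "x \<noteq> 0" and F: "Fm k lam x + x = 0" by blast
  define u where "u = lam * x ^ (?q + 1)"
  have "(u + u ^ ?q) + x ^ (2 ^ Suc k) = 0" using u_id1[of k lam x] F unfolding u_def
    by (simp add: power_0_left)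
  hence ux: "u + u ^ ?q = x ^ (2 ^ Suc k)" using add_eq0_iff by metis
  obtain w where w: "w ^ (2 ^ Suc k) = u" using root2q_ex by blast
  have "(w + w ^ ?q) ^ (2 ^ Suc k) = u + u ^ ?q"
    unfolding frob_add swap_pow w ..
  hence "(w + w ^ ?q) ^ (2 ^ Suc k) = x ^ (2 ^ Suc k)" using ux by simp
  hence xw: "x = w + w ^ ?q" by (rule frob_inj[symmetric])
  have w0: "w \<noteq> 0" using xw x0 by (auto simp: power_0_left)
  have wq: "w ^ ?q \<noteq> w" using xw x0 add_self by auto
  define v0 where "v0 = 1 / w"
  have "v0 ^ (2 ^ gcd k n) \<noteq> v0"
  proof
    assume "v0 ^ (2 ^ gcd k n) = v0"
    hence "w ^ (2 ^ gcd k n) = w" unfolding v0_def using w0 by (simp add: power_one_over)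
    hence "w ^ ?q = w" by (rule fix_dvd[OF gcd_dvd1])
    thus False using wq by simp
  qed
  moreover have "lam = v0 ^ (2 ^ (2 * k) + 1) / (v0 + v0 ^ ?q) ^ (?q + 1)"
  proof -
    have "lam = u / x ^ (?q + 1)" using x0 unfolding u_def by simp
    also have "\<dots> = w ^ (?q * 2) / (w + w ^ ?q) ^ (?q + 1)"
      using w xw by (simp add: power_Suc2 mult.commute)
    also have "\<dots> = v0 ^ (2 ^ (2 * k) + 1) / (v0 + v0 ^ ?q) ^ (?q + 1)"
      unfolding v0_def by (rule lamform[OF w0, symmetric])
    finally show ?thesis .
  qed
  ultimately show "\<exists>v0. v0 ^ (2 ^ gcd k n) \<noteq> v0 \<and> lam = v0 ^ (2 ^ (2 * k) + 1) / (v0 + v0 ^ (2 ^ k)) ^ (2 ^ k + 1)"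
    by blast
next
  let ?q = "2 ^ k :: nat"
  assume "\<exists>v0. v0 ^ (2 ^ gcd k n) \<noteq> v0 \<and> lam = v0 ^ (2 ^ (2 * k) + 1) / (v0 + v0 ^ (2 ^ k)) ^ (2 ^ k + 1)"
  then obtain v0 where v0d: "v0 ^ (2 ^ gcd k n) \<noteq> v0"
    and lv: "lam = v0 ^ (2 ^ (2 * k) + 1) / (v0 + v0 ^ ?q) ^ (?q + 1)" by blast
  have v00: "v0 \<noteq> 0" using v0d by (auto simp: power_0_left)
  define w where "w = 1 / v0"
  have w0: "w \<noteq> 0" using v00 unfolding w_def by simp
  have vw: "v0 = 1 / w" unfolding w_def by simp
  have wq: "w ^ ?q \<noteq> w"
  proof
    assume "w ^ ?q = w"
    hence "w ^ (2 ^ gcd k n) = w" by (rule fix_gcd[OF k0])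
    hence "v0 ^ (2 ^ gcd k n) = v0" unfolding vw by (simp add: power_one_over)
    thus False using v0d by simp
  qed
  define x where "x = w + w ^ ?q"
  have x0: "x \<noteq> 0" unfolding x_def using wq add_eq0_iff by metis
  have lw: "lam = w ^ (?q * 2) / x ^ (?q + 1)"
    unfolding lv vw x_def by (rule lamform[OF w0])
  have u: "lam * x ^ (?q + 1) = w ^ (2 ^ Suc k)"
    unfolding lw using x0 by (simp add: power_Suc2 mult.commute)
  have "(Fm k lam x + x) ^ ?q * x ^ ?q
      = (w ^ (2 ^ Suc k) + (w ^ (2 ^ Suc k)) ^ ?q) + (w ^ (2 ^ Suc k) + (w ^ (2 ^ Suc k)) ^ ?q)"
    unfolding u_id1 u unfolding x_def frob_add swap_pow ..
  also have "\<dots> = 0" by (rule add_self)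
  finally have "(Fm k lam x + x) ^ ?q * x ^ ?q = 0" .
  hence "Fm k lam x + x = 0" using x0 by simp
  thus "\<exists>x::'a. x \<noteq> 0 \<and> Fm k lam x + x = 0" using x0 by blast
qed


lemma bij_additive:
  assumes add: "\<And>x y. G (x + y) = G x + G (y::'a)"
  shows "bij G \<longleftrightarrow> (\<forall>a. G a = (0::'a) \<longrightarrow> a = 0)"
proof -
  have G0: "G 0 = 0" using add[of 0 0] by (metis add_cancel_right_right add_0_right)
  show ?thesis
  proof
    assume "bij G"
    hence "inj G" by (simp add: bij_def)
    thus "\<forall>a. G a = 0 \<longrightarrow> a = 0" using G0 by (metis injD)
  next
    assume triv: "\<forall>a. G a = 0 \<longrightarrow> a = 0"
    have "inj G"
    proof (rule injI)
      fix x y assume "G x = G y"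
      hence "G (x + y) = 0" using add add_self by simp
      hence "x + y = 0" using triv by blast
      thus "x = y" using add_eq0_iff by simp
    qed
    thus "bij G" using finite_UNIV_inj_surj[of G] by (simp add: bij_def)
  qed
qed

lemma cm_iff: "complete_mapping (Fm k lam) \<longleftrightarrow>
   (\<forall>a. Fm k lam a = (0::'a) \<longrightarrow> a = 0) \<and> (\<forall>a. Fm k lam a + a = (0::'a) \<longrightarrow> a = 0)"
proof -
  have "bij (Fm k lam) \<longleftrightarrow> (\<forall>a. Fm k lam a = (0::'a) \<longrightarrow> a = 0)"
    by (rule bij_additive) (rule Fm_add)
  moreover have "bij (\<lambda>x. Fm k lam x + x) \<longleftrightarrow> (\<forall>a. Fm k lam a + a = (0::'a) \<longrightarrow> a = 0)"
    by (rule bij_additive) (simp add: Fm_add algebra_simps)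
  ultimately show ?thesis by (simp add: complete_mapping_def)
qed

end

theorem theorem3:
  fixes lam :: "'a::{field,finite}" and n k d :: nat and \<alpha> :: "nat \<Rightarrow> 'a"
  assumes card: "card (UNIV :: 'a set) = 2 ^ n"
    and char2: "(2::'a) = 0"
    and even: "even n"
    and k: "k \<ge> 1"
    and d: "d = gcd k n"
    and sd: "self_dual_basis n \<alpha>"
  shows "(bent_negabent n \<alpha> (\<lambda>x. tr n (lam * x ^ (2 ^ k + 1)))
           \<longleftrightarrow> complete_mapping
                 (\<lambda>x. lam ^ (2 ^ (n - k mod n)) * x ^ (2 ^ (n - k mod n)) + lam * x ^ (2 ^ k)))
       \<and> (complete_mapping
                 (\<lambda>x. lam ^ (2 ^ (n - k mod n)) * x ^ (2 ^ (n - k mod n)) + lam * x ^ (2 ^ k))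
           \<longleftrightarrow> ((\<nexists>v0. v0 ^ (2 ^ d) \<noteq> v0 \<and>
                     lam = v0 ^ (2 ^ (2 * k) + 1) / (v0 + v0 ^ (2 ^ k)) ^ (2 ^ k + 1))
               \<and> (\<nexists>v. lam = v ^ (2 ^ k + 1))))"
proof -
  have FF: "(\<lambda>x. lam ^ (2 ^ (n - k mod n)) * x ^ (2 ^ (n - k mod n)) + lam * x ^ (2 ^ k)) = Fm n k lam"
    by (rule ext) (simp add: Fm_def[OF card char2])
  have k0: "k \<noteq> 0" using k by simp
  have cm: "complete_mapping (Fm n k lam) \<longleftrightarrow>
   (\<forall>a. Fm n k lam a = 0 \<longrightarrow> a = 0) \<and> (\<forall>a. Fm n k lam a + a = 0 \<longrightarrow> a = 0)"
    by (rule cm_iff[OF card char2])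
  have b: "bent n (\<lambda>x::'a. tr n (lam * x ^ (2 ^ k + 1))) \<longleftrightarrow> (\<forall>a. Fm n k lam a = 0 \<longrightarrow> a = 0)"
    by (rule bent_iff[OF card char2 sd])
  have nb: "negabent n \<alpha> (\<lambda>x::'a. tr n (lam * x ^ (2 ^ k + 1))) \<longleftrightarrow> (\<forall>a. Fm n k lam a + a = 0 \<longrightarrow> a = 0)"
    by (rule negabent_iff[OF card char2 sd])
  have k0e: "(\<forall>a. Fm n k lam a = 0 \<longrightarrow> a = 0) \<longleftrightarrow> (\<nexists>v. lam = v ^ (2 ^ k + 1))"
    using ker0[OF card char2, of k lam] by (metis (no_types, lifting))
  have k1e: "(\<forall>a. Fm n k lam a + a = 0 \<longrightarrow> a = 0) \<longleftrightarrow>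
      (\<nexists>v0. v0 ^ (2 ^ d) \<noteq> v0 \<and> lam = v0 ^ (2 ^ (2 * k) + 1) / (v0 + v0 ^ (2 ^ k)) ^ (2 ^ k + 1))"
    unfolding d using ker1[OF card char2 k0, of lam] by (metis (no_types, lifting))
  show ?thesis unfolding FF bent_negabent_def cm b nb k0e k1e by blast
qed

end
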